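(* Let $L$ be a commutative language with the linear property over $\Sigma=\{a_1,\dots,a_k\}$, with constant $\vec{c}$ and periods $\mathcal{P}=\{\vec{p}^{(1)},\dots,\vec{p}^{(q)}\}$, $q>0$, where every component of every period is even. Then for all even integers $m\ge 4$ and every $R=\{r\}$ with $1\le r\le m/2-1$, the decomposed base $D=X\cup(Y\lhd W)$ built from these data as described below satisfies $L=\mathcal{C}(D)$.
   Context: Notation: $\Sigma$ is the terminal alphabet, $\mathring\Sigma$ its dotted copy, $\widetilde\Sigma=\Sigma\cup\mathring\Sigma$, $\widetilde a=\{a,\mathring a\}$. $\Psi$ is the Parikh image, $\pi_\Delta$ is projection onto $\Delta$, and $\sqcup\!\sqcup$ denotes the shuffle operation. The match $@$ on letters is $a@\mathring a=\mathring a@a=a$, $\mathring a@\mathring a=\mathring a$, undefined otherwise; it extends letter-by-letter to equal-length words and to languages. $B^{@}$ is the closure of $B$ under match, and $\mathcal{C}(B)=B^{@}\cap\Sigma^*$. $\mathit{switch}$ exchanges $a$ and $\mathring a$. A language with the linear property has Parikh image $\{\vec c+n_1\vec p^{(1)}+\dots+n_q\vec p^{(q)}\mid n_i\ge0\}$; it is commutative if membership depends only on the Parikh image. For the module $m$ and set of slots $R$, let $R_m(a)=\{\mathring a\, a^{r-1}\mathring a\, a^{m-r-1}\mid r\in R\}$. The scaffold set is $sc(R)_m=\{x\mid\forall a\in\Sigma,\ \pi_{\widetilde a}(x)\in(R_m(a)\cup a)^*\}$, and the fill set is $fl(R)_m=\mathit{switch}(sc(R)_m)-\mathring\Sigma^*$.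 Appending: for $A\subseteq a^+$, factor $B=B_{\widetilde a}\cdot B_{\widetilde\Sigma-\widetilde a}$, where $B_{\widetilde a}\subseteq\widetilde\Sigma^*\widetilde a$ and $B_{\widetilde\Sigma-\widetilde a}\subseteq(\widetilde\Sigma-\widetilde a)^*$. Then $B\lhd A=B_{\widetilde a}\cdot(B_{\widetilde\Sigma-\widetilde a}\,\sqcup\!\sqcup\,A)$. For a commutative $F$, $B\lhd F$ applies $\lhd\pi_{a_i}(F)$ successively for all $i$. The sets are defined as follows: - $X=\bigcup_{\vec p\in\mathcal P}\{x\in fl(R)_m\mid\Psi(\pi_\Sigma(x))=\vec p\}$; - $Y=(R_m(a_1))^*\,\sqcup\!\sqcup\,\cdots\,\sqcup\!\sqcup\,(R_m(a_k))^*$; - $W$ is the finite commutative language with $\Psi(W)=\{\vec c+h_1\vec p^{(1)}+\dots+h_q\vec p^{(q)}\mid 0\le h_i<m/2\}$; - $D=X\cup(Y\lhd W)$, which is decomposed with scaffold $Y\lhd W$ and fill $X$. *)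

theory Defs
  imports Main
begin

text \<open>Letters of the extended alphabet: undotted letters U a (in Sigma) and
  dotted letters Dt a (in the dotted copy).  The alphabet Sigma is the finite
  enumerated type 'a, with a_1,...,a_k given by Enum.enum.\<close>
datatype 'a tl = U 'a | Dt 'a

fun base :: "'a tl \<Rightarrow> 'a" where
  "base (U a) = a" | "base (Dt a) = a"

fun switch1 :: "'a tl \<Rightarrow> 'a tl" where
  "switch1 (U a) = Dt a" | "switch1 (Dt a) = U a"

definition switch :: "'a tl list set \<Rightarrow> 'a tl list set" where
  "switch B = map switch1 ` B"

fun lmatch :: "'a tl \<Rightarrow> 'a tl \<Rightarrow> 'a tl option" where
  "lmatch (U a) (Dt b) = (if a = b then Some (U a) else None)"
| "lmatch (Dt a) (U b) = (if a = b then Some (U a) else None)"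
| "lmatch (Dt a) (Dt b) = (if a = b then Some (Dt a) else None)"
| "lmatch (U a) (U b) = None"

definition wmatch :: "'a tl list \<Rightarrow> 'a tl list \<Rightarrow> 'a tl list option" where
  "wmatch x y =
     (if length x = length y \<and> (\<forall>(s, t) \<in> set (zip x y). lmatch s t \<noteq> None)
      then Some (map (\<lambda>(s, t). the (lmatch s t)) (zip x y)) else None)"

inductive_set match_closure :: "'a tl list set \<Rightarrow> 'a tl list set" for B where
  mc_base: "x \<in> B \<Longrightarrow> x \<in> match_closure B"
| mc_step: "x \<in> match_closure B \<Longrightarrow> y \<in> match_closure B \<Longrightarrow> wmatch x y = Some z
            \<Longrightarrow> z \<in> match_closure B"

text \<open>C(B) = B^@ \<inter> Sigma^*, with Sigma^* identified with 'a list.\<close>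
definition C :: "'a tl list set \<Rightarrow> 'a list set" where
  "C B = {w. map U w \<in> match_closure B}"

definition parikh :: "'a list \<Rightarrow> 'a \<Rightarrow> nat" where
  "parikh w = (\<lambda>a. count_list w a)"

definition proj_undotted :: "'a tl list \<Rightarrow> 'a list" where
  "proj_undotted x = concat (map (\<lambda>t. case t of U a \<Rightarrow> [a] | Dt _ \<Rightarrow> []) x)"

definition proj_tilde :: "'a \<Rightarrow> 'a tl list \<Rightarrow> 'a tl list" where
  "proj_tilde a x = filter (\<lambda>t. base t = a) x"

definition kstar :: "'b list set \<Rightarrow> 'b list set" where
  "kstar A = {concat ws | ws. set ws \<subseteq> A}"

definition Rm :: "nat \<Rightarrow> nat set \<Rightarrow> 'a \<Rightarrow> 'a tl list set" where
  "Rm m R a = {[Dt a] @ replicate (r - 1) (U a) @ [Dt a] @ replicate (m - r - 1) (U a) | r. r \<in> R}"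

definition sc :: "nat \<Rightarrow> nat set \<Rightarrow> 'a tl list set" where
  "sc m R = {x. \<forall>a. proj_tilde a x \<in> kstar (Rm m R a \<union> {[U a]})}"

definition fl :: "nat \<Rightarrow> nat set \<Rightarrow> 'a tl list set" where
  "fl m R = switch (sc m R) - lists (range Dt)"

definition shuffle_lang :: "'b list set \<Rightarrow> 'b list set \<Rightarrow> 'b list set" where
  "shuffle_lang A B = \<Union> {shuffles x y | x y. x \<in> A \<and> y \<in> B}"

definition Yset :: "nat \<Rightarrow> nat set \<Rightarrow> ('a::enum) tl list set" where
  "Yset m R = foldr (\<lambda>a acc. shuffle_lang (kstar (Rm m R a)) acc) Enum.enum {[]}"

text \<open>Factorisation w = u v with u empty or ending in a letter of {a, dotted a},
  and v free of such letters.\<close>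
definition split_last :: "'a \<Rightarrow> 'a tl list \<Rightarrow> 'a tl list \<times> 'a tl list" where
  "split_last a w = (let v = rev (takeWhile (\<lambda>t. base t \<noteq> a) (rev w))
                     in (take (length w - length v) w, v))"

text \<open>B \<lhd> A for A a language of a-words.\<close>
definition append_lang :: "'a tl list set \<Rightarrow> 'a \<Rightarrow> 'a tl list set \<Rightarrow> 'a tl list set" where
  "append_lang B a A =
     {fst (split_last a w) @ z | w x z. w \<in> B \<and> x \<in> A \<and> z \<in> shuffles (snd (split_last a w)) x}"

text \<open>B \<lhd> F for commutative F: for each word f of F, append successively
  pi_{a_1}(f), ..., pi_{a_k}(f).\<close>
definition append_comm :: "('a::enum) tl list set \<Rightarrow> 'a list set \<Rightarrow> 'a tl list set" where
  "append_comm B F =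
     (\<Union>f\<in>F. foldl (\<lambda>B' a. append_lang B' a {map U (filter (\<lambda>b. b = a) f)}) B Enum.enum)"

definition linset :: "('a \<Rightarrow> nat) \<Rightarrow> ('a \<Rightarrow> nat) set \<Rightarrow> ('a \<Rightarrow> nat) set" where
  "linset c P = {v. \<exists>n. v = (\<lambda>a. c a + (\<Sum>p\<in>P. n p * p a))}"

definition commutative_lang :: "'a list set \<Rightarrow> bool" where
  "commutative_lang L = (\<forall>u v. parikh u = parikh v \<longrightarrow> (u \<in> L \<longleftrightarrow> v \<in> L))"

definition Wlang :: "('a \<Rightarrow> nat) \<Rightarrow> ('a \<Rightarrow> nat) set \<Rightarrow> nat \<Rightarrow> 'a list set" where
  "Wlang c P m = {w. \<exists>h. (\<forall>p\<in>P. 2 * h p < m) \<and> parikh w = (\<lambda>a. c a + (\<Sum>p\<in>P. h p * p a))}"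

definition Xset :: "('a \<Rightarrow> nat) \<Rightarrow> ('a \<Rightarrow> nat) set \<Rightarrow> nat \<Rightarrow> nat set \<Rightarrow> 'a tl list set" where
  "Xset c P m R = (\<Union>p\<in>P. {x \<in> fl m R. parikh (proj_undotted x) = p})"

definition Dset :: "('a::enum \<Rightarrow> nat) \<Rightarrow> ('a \<Rightarrow> nat) set \<Rightarrow> nat \<Rightarrow> nat set \<Rightarrow> 'a tl list set" where
  "Dset c P m R = Xset c P m R \<union> append_comm (Yset m R) (Wlang c P m)"

end

theory Submission
  imports Defs
begin

abbreviation pj :: "'a \<Rightarrow> 'a tl list \<Rightarrow> 'a tl list" where
  "pj a x \<equiv> filter (\<lambda>t. base t = a) x"

lemma wmatch_Nil_Nil[simp]: "wmatch [] [] = Some []"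
  by (simp add: wmatch_def)
lemma wmatch_Nil_Cons[simp]: "wmatch [] (t#y) = None"
  by (simp add: wmatch_def)
lemma wmatch_Cons_Nil[simp]: "wmatch (s#x) [] = None"
  by (simp add: wmatch_def)
lemma wmatch_Cons_Cons[simp]:
  "wmatch (s#x) (t#y) = (case lmatch s t of None \<Rightarrow> None | Some u \<Rightarrow> map_option ((#) u) (wmatch x y))"
  by (cases "lmatch s t") (auto simp: wmatch_def)

lemma wmatch_nth:
  assumes "wmatch x y = Some z"
  shows "length z = length x \<and> length y = length x \<and> (\<forall>i<length x. lmatch (x!i) (y!i) = Some (z!i))"
  using assms
proof (induction x arbitrary: y z)
  case Nil then show ?case by (cases y) auto
next
  case (Cons s x)
  then obtain t y' where y: "y = t # y'" by (cases y) auto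
  from Cons.prems y obtain u z' where u: "lmatch s t = Some u" and z': "wmatch x y' = Some z'" and z: "z = u # z'"
    by (auto split: option.splits)
  from Cons.IH[OF z'] u show ?case by (auto simp: y z nth_Cons split: nat.splits)
qed

lemma lmatch_cases:
  "lmatch s t = Some u \<Longrightarrow> base s = base t \<and> base u = base s \<and>
     (u = Dt (base s) \<longleftrightarrow> s = Dt (base s) \<and> t = Dt (base s)) \<and>
     (\<exists>b. u = U b \<or> u = Dt b) \<and> \<not> (\<exists>b. s = U b \<and> t = U b)"
  by (cases s; cases t) (auto split: if_splits)

lemma lmatch_UU[simp]: "lmatch (U a) (U b) = None" by simp

lemma wmatch_props:
  assumes "wmatch x y = Some z"
  shows "map base z = map base x \<and> map base y = map base x \<and>
    count_list z (U a) = count_list x (U a) + count_list y (U a) \<and>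
    wmatch (pj b x) (pj b y) = Some (pj b z)"
  using assms
proof (induction x arbitrary: y z)
  case Nil then show ?case by (cases y) auto
next
  case (Cons s x)
  then obtain t y' where y: "y = t # y'" by (cases y) auto
  from Cons.prems y obtain u z' where u: "lmatch s t = Some u" and z': "wmatch x y' = Some z'" and z: "z = u # z'"
    by (auto split: option.splits)
  note IH = Cons.IH[OF z']
  show ?case using IH u unfolding y z
    by (cases s; cases t) (auto split: if_splits)
qed

definition blk :: "nat \<Rightarrow> nat \<Rightarrow> 'a \<Rightarrow> 'a tl list" where
  "blk m r a = [Dt a] @ replicate (r - 1) (U a) @ [Dt a] @ replicate (m - r - 1) (U a)"

lemma Rm_single: "Rm m {r} a = {blk m r a}"
  by (auto simp: Rm_def blk_def)

lemma set_replicate_sub: "set ws \<subseteq> {b} \<Longrightarrow> ws = replicate (length ws) b"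
  by (induct ws) auto

lemma kstar_single: "kstar {b} = {concat (replicate k b) | k. True}"
  unfolding kstar_def
  apply auto
  by (metis set_replicate_sub)

lemma kstarRm: "x \<in> kstar (Rm m {r} a) \<longleftrightarrow> (\<exists>k. x = concat (replicate k (blk m r a)))"
  by (simp add: Rm_single kstar_single)

lemma base_blk: "t \<in> set (blk m r a) \<Longrightarrow> base t = a"
  by (auto simp: blk_def)

lemma pj_concat_blk: "pj b (concat (replicate k (blk m r a))) = (if b = a then concat (replicate k (blk m r a)) else [])"
  by (induct k) (auto simp: blk_def)

lemma count_replicate_gen: "count_list (replicate n x) y = (if x = y then n else 0)"
  by (induct n) auto

lemma length_blk: "1 \<le> r \<Longrightarrow> r + 1 < m \<Longrightarrow> length (blk m r a) = m"
  by (simp add: blk_def)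

lemma count_blk: "1 \<le> r \<Longrightarrow> r + 1 < m \<Longrightarrow> count_list (blk m r a) (U a) = m - 2"
  by (simp add: blk_def count_replicate_gen)


lemma length_concat_rep: "length (concat (replicate k xs)) = k * length xs"
  by (induct k) auto

lemma count_concat_rep: "count_list (concat (replicate k xs)) y = k * count_list xs y"
  by (induct k) (auto simp: count_list_append)

lemma last_blk: "1 \<le> r \<Longrightarrow> r + 1 < m \<Longrightarrow> blk m r a ! (m - 1) = U a"
proof -
  assume h: "1 \<le> r" "r + 1 < m"
  have "blk m r a = ([Dt a] @ replicate (r - 1) (U a) @ [Dt a] @ replicate (m - r - 2) (U a)) @ [U a]"
    using h by (simp add: blk_def) (metis Suc_diff_Suc diff_diff_left add_2_eq_Suc' replicate_Suc replicate_append_same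
        Suc_lessD less_diff_conv numeral_2_eq_2 plus_1_eq_Suc)
  moreover have "m - 1 = length ([Dt a] @ replicate (r - 1) (U a) @ [Dt a] @ replicate (m - r - 2) (U a))"
    using h by simp
  ultimately show ?thesis by (metis nth_append_length)
qed

lemma pj_shuffles: "z \<in> shuffles x y \<Longrightarrow> pj b z \<in> shuffles (pj b x) (pj b y)"
  using filter_shuffles[of "\<lambda>t. base t = b" x y] by blast

lemma pj_nil_all: "(\<forall>a. pj a y = []) \<Longrightarrow> y = []"
  by (cases y) (auto dest: spec[of _ "base (hd y)"])

lemma Yfold_sound:
  "distinct as \<Longrightarrow> y \<in> foldr (\<lambda>a acc. shuffle_lang (kstar (Rm m {r} a)) acc) as {[]} \<Longrightarrow>
   (\<forall>a. pj a y \<in> (if a \<in> set as then kstar (Rm m {r} a) else {[]}))"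
proof (induction as arbitrary: y)
  case Nil then show ?case by simp
next
  case (Cons a0 as)
  from Cons.prems obtain x y' where x: "x \<in> kstar (Rm m {r} a0)" and y': "y' \<in> foldr (\<lambda>a acc. shuffle_lang (kstar (Rm m {r} a)) acc) as {[]}"
    and y: "y \<in> shuffles x y'"
    by (auto simp: shuffle_lang_def)
  from x obtain k where xk: "x = concat (replicate k (blk m r a0))" by (auto simp: kstarRm)
  have IH: "\<forall>a. pj a y' \<in> (if a \<in> set as then kstar (Rm m {r} a) else {[]})"
    using Cons.IH[OF _ y'] Cons.prems by simp
  show ?case
  proof
    fix a
    have s: "pj a y \<in> shuffles (pj a x) (pj a y')" by (rule pj_shuffles[OF y])
    show "pj a y \<in> (if a \<in> set (a0 # as) then kstar (Rm m {r} a) else {[]})"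
    proof (cases "a = a0")
      case True
      then have "a \<notin> set as" using Cons.prems by simp
      then have "pj a y' = []" using IH by (auto split: if_splits)
      then show ?thesis using s True x xk by (simp add: pj_concat_blk)
    next
      case False
      then have "pj a x = []" by (simp add: xk pj_concat_blk)
      then show ?thesis using s IH False by auto
    qed
  qed
qed

lemma Yset_sound: "y \<in> Yset m {r} \<Longrightarrow> pj a y \<in> kstar (Rm m {r} a)"
  using Yfold_sound[of "Enum.enum" y m r] by (simp add: Yset_def enum_distinct enum_UNIV)

lemma Yfold_compl:
  "(\<forall>a. pj a y \<in> (if a \<in> set as then kstar (Rm m {r} a) else {[]})) \<Longrightarrow>
   y \<in> foldr (\<lambda>a acc. shuffle_lang (kstar (Rm m {r} a)) acc) as {[]}"
proof (induction as arbitrary: y)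
  case Nil then show ?case using pj_nil_all[of y] by simp
next
  case (Cons a0 as)
  let ?y' = "filter (\<lambda>t. base t \<noteq> a0) y"
  have y: "y \<in> shuffles (pj a0 y) ?y'"
    using partition_in_shuffles[of y "\<lambda>t. base t = a0"] by simp
  have "\<forall>a. pj a ?y' \<in> (if a \<in> set as then kstar (Rm m {r} a) else {[]})"
  proof
    fix a
    show "pj a ?y' \<in> (if a \<in> set as then kstar (Rm m {r} a) else {[]})"
    proof (cases "a = a0")
      case True
      have "pj a ?y' = []" using True by (simp add: filter_filter)
      then show ?thesis by (auto simp: kstarRm intro: exI[of _ 0])
    next
      case False
      have "pj a ?y' = pj a y" using False by (simp add: filter_filter) (metis)
      then show ?thesis using Cons.prems False by (auto split: if_splits)
    qed
  qed
  then have "?y' \<in> foldr (\<lambda>a acc. shuffle_lang (kstar (Rm m {r} a)) acc) as {[]}" by (rule Cons.IH)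
  moreover have "pj a0 y \<in> kstar (Rm m {r} a0)" using Cons.prems by (auto dest: spec[of _ a0])
  ultimately show ?case using y by (auto simp: shuffle_lang_def)
qed

lemma Yset_compl: "(\<And>a. pj a y \<in> kstar (Rm m {r} a)) \<Longrightarrow> y \<in> Yset m {r}"
  unfolding Yset_def by (rule Yfold_compl) (simp add: enum_UNIV)

lemma split_last_eq:
  "split_last a w = (rev (dropWhile (\<lambda>t. base t \<noteq> a) (rev w)), rev (takeWhile (\<lambda>t. base t \<noteq> a) (rev w)))"
proof -
  let ?P = "\<lambda>t. base t \<noteq> a"
  have w: "w = rev (dropWhile ?P (rev w)) @ rev (takeWhile ?P (rev w))"
    by (metis rev_append rev_rev_ident takeWhile_dropWhile_id)
  have "take (length w - length (rev (takeWhile ?P (rev w)))) w = rev (dropWhile ?P (rev w))"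
    by (subst (2) w, subst w) simp
  then show ?thesis by (simp add: split_last_def Let_def)
qed

lemma append_sound:
  assumes "t \<in> append_lang B a {replicate e (U a)}"
  shows "\<exists>t0\<in>B. pj a t = pj a t0 @ replicate e (U a) \<and> (\<forall>b. b \<noteq> a \<longrightarrow> pj b t = pj b t0)"
proof -
  let ?P = "\<lambda>t. base t \<noteq> a"
  from assms obtain w z where w: "w \<in> B" and t: "t = fst (split_last a w) @ z"
    and z: "z \<in> shuffles (snd (split_last a w)) (replicate e (U a))"
    by (auto simp: append_lang_def)
  let ?u = "rev (dropWhile ?P (rev w))" and ?v = "rev (takeWhile ?P (rev w))"
  have wuv: "w = ?u @ ?v"
    by (metis rev_append rev_rev_ident takeWhile_dropWhile_id)
  have v: "pj a ?v = []"
    by (auto simp: filter_empty_conv dest: set_takeWhileD)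
  have zb: "\<And>b. pj b z \<in> shuffles (pj b ?v) (pj b (replicate e (U a)))"
    using z unfolding split_last_eq by (simp add: pj_shuffles)
  have tu: "t = ?u @ z" using t unfolding split_last_eq by simp
  have za: "pj a z = replicate e (U a)"
  proof -
    have "pj a (replicate e (U a)) = replicate e (U a)" by (induct e) auto
    then show ?thesis using zb[of a] v by simp
  qed
  have zo: "\<And>b. b \<noteq> a \<Longrightarrow> pj b z = pj b ?v"
  proof -
    fix b assume "b \<noteq> a"
    then have "pj b (replicate e (U a)) = []" by (induct e) auto
    then show "pj b z = pj b ?v" using zb[of b] by simp
  qed
  have "pj a t = pj a w @ replicate e (U a)"
    using za v tu wuv by (metis filter_append self_append_conv)
  moreover have "\<forall>b. b \<noteq> a \<longrightarrow> pj b t = pj b w"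
    using zo tu wuv by (metis filter_append)
  ultimately
  show ?thesis using w by blast
qed

lemma decomp_last:
  "e \<le> length (pj a t) \<Longrightarrow> \<exists>u z. t = u @ z \<and> (u = [] \<or> base (last u) = a) \<and> length (pj a z) = e"
proof (induction t arbitrary: e rule: rev_induct)
  case Nil then show ?case by auto
next
  case (snoc x t)
  show ?case
  proof (cases "base x = a")
    case False
    have "e \<le> length (pj a t)" using snoc.prems False by simp
    then obtain u z where "t = u @ z" "u = [] \<or> base (last u) = a" "length (pj a z) = e"
      using snoc.IH by blast
    then show ?thesis using False by (intro exI[of _ u] exI[of _ "z @ [x]"]) auto
  next
    case True
    show ?thesis
    proof (cases e)
      case 0
      then show ?thesis using True by (intro exI[of _ "t @ [x]"] exI[of _ "[]"]) auto
    next
      case (Suc e')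
      have "e' \<le> length (pj a t)" using snoc.prems True Suc by simp
      then obtain u z where "t = u @ z" "u = [] \<or> base (last u) = a" "length (pj a z) = e'"
        using snoc.IH by blast
      then show ?thesis using True Suc by (intro exI[of _ u] exI[of _ "z @ [x]"]) auto
    qed
  qed
qed

lemma append_compl:
  assumes "pj a t = pre @ replicate e (U a)"
  shows "\<exists>t'. pj a t' = pre \<and> (\<forall>b. b \<noteq> a \<longrightarrow> pj b t' = pj b t) \<and>
           (t' \<in> B \<longrightarrow> t \<in> append_lang B a {replicate e (U a)})"
proof -
  let ?P = "\<lambda>t. base t \<noteq> a"
  have "e \<le> length (pj a t)" using assms by simp
  then obtain u z where t: "t = u @ z" and u: "u = [] \<or> base (last u) = a" and z: "length (pj a z) = e"
    using decomp_last[of e a t] by blast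
  have "pj a u @ pj a z = pre @ replicate e (U a)" using assms unfolding t by (simp only: filter_append)
  then have pz: "pj a z = replicate e (U a)" and pu: "pj a u = pre" using z
    by (metis append_eq_append_conv length_replicate)+
  let ?v = "filter ?P z"
  let ?t' = "u @ ?v"
  have tw: "takeWhile ?P (rev u) = []" and dw: "dropWhile ?P (rev u) = rev u"
  proof -
    have "u = [] \<or> (\<exists>u0 x. u = u0 @ [x] \<and> base x = a)"
      using u by (metis append_butlast_last_id)
    then show "takeWhile ?P (rev u) = []" "dropWhile ?P (rev u) = rev u" by auto
  qed
  have sl: "split_last a ?t' = (u, ?v)"
  proof -
    have "takeWhile ?P (rev ?v @ rev u) = rev ?v @ takeWhile ?P (rev u)"
      by (rule takeWhile_append2) auto
    moreover have "dropWhile ?P (rev ?v @ rev u) = dropWhile ?P (rev u)"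
      by (rule dropWhile_append2) auto
    ultimately show ?thesis unfolding split_last_eq using tw dw by simp
  qed
  have zs: "z \<in> shuffles ?v (replicate e (U a))"
    using partition_in_shuffles[of z ?P] pz by (simp add: shuffles_commutes)
  have "?t' \<in> B \<longrightarrow> t \<in> append_lang B a {replicate e (U a)}"
  proof
    assume tB: "?t' \<in> B"
    have "t = fst (split_last a ?t') @ z" using sl t by simp
    moreover have "z \<in> shuffles (snd (split_last a ?t')) (replicate e (U a))" using sl zs by simp
    ultimately show "t \<in> append_lang B a {replicate e (U a)}"
      unfolding append_lang_def using tB by blast
  qed
  moreover have "pj a ?t' = pre" using pu by (simp add: filter_filter)
  moreover have "\<forall>b. b \<noteq> a \<longrightarrow> pj b ?t' = pj b t"
  proof (intro allI impI)
    fix b assume ba: "b \<noteq> a"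
    have "pj b ?v = pj b z" unfolding filter_filter by (rule filter_cong) (use ba in auto)
    then show "pj b ?t' = pj b t" unfolding t by simp
  qed
  ultimately show ?thesis by blast
qed

lemma filter_eq_rep: "map U (filter (\<lambda>b. b = a) f) = replicate (count_list f a) (U a)"
  by (induct f) auto

abbreviation appF :: "'a list \<Rightarrow> 'a tl list set \<Rightarrow> 'a \<Rightarrow> 'a tl list set" where
  "appF f \<equiv> (\<lambda>B' a. append_lang B' a {map U (filter (\<lambda>b. b = a) f)})"

lemma foldl_sound:
  "distinct as \<Longrightarrow> t \<in> foldl (appF f) B as \<Longrightarrow>
   \<exists>t0\<in>B. \<forall>a. pj a t = pj a t0 @ (if a \<in> set as then replicate (count_list f a) (U a) else [])"
proof (induction as arbitrary: t rule: rev_induct)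
  case Nil then show ?case by auto
next
  case (snoc b as)
  from snoc.prems have t: "t \<in> append_lang (foldl (appF f) B as) b {replicate (count_list f b) (U b)}"
    by (simp add: filter_eq_rep)
  from append_sound[OF t] obtain t1 where t1: "t1 \<in> foldl (appF f) B as"
    and hb: "pj b t = pj b t1 @ replicate (count_list f b) (U b)"
    and ho: "\<forall>a. a \<noteq> b \<longrightarrow> pj a t = pj a t1" by blast
  from snoc.IH[OF _ t1] snoc.prems obtain t0 where t0: "t0 \<in> B"
    and h0: "\<forall>a. pj a t1 = pj a t0 @ (if a \<in> set as then replicate (count_list f a) (U a) else [])"
    by auto
  have bn: "b \<notin> set as" using snoc.prems by simp
  show ?case
    apply (rule bexI[OF _ t0])
    using hb ho h0 bn by auto
qed

lemma foldl_compl: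
  "distinct as \<Longrightarrow> (\<forall>a. pj a t = pre a @ (if a \<in> set as then replicate (count_list f a) (U a) else [])) \<Longrightarrow>
   (\<forall>t0. (\<forall>a. pj a t0 = pre a) \<longrightarrow> t0 \<in> B) \<Longrightarrow> t \<in> foldl (appF f) B as"
proof (induction as arbitrary: t rule: rev_induct)
  case Nil then show ?case by auto
next
  case (snoc b as)
  have bn: "b \<notin> set as" using snoc.prems by simp
  have "pj b t = pre b @ replicate (count_list f b) (U b)" using snoc.prems(2) by auto
  from append_compl[OF this, of "foldl (appF f) B as"] obtain t' where
    h1: "pj b t' = pre b" and h2: "\<forall>a. a \<noteq> b \<longrightarrow> pj a t' = pj a t"
    and h3: "t' \<in> foldl (appF f) B as \<longrightarrow> t \<in> append_lang (foldl (appF f) B as) b {replicate (count_list f b) (U b)}"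
    by blast
  have "\<forall>a. pj a t' = pre a @ (if a \<in> set as then replicate (count_list f a) (U a) else [])"
    using h1 h2 bn snoc.prems(2) by auto
  then have "t' \<in> foldl (appF f) B as" using snoc.IH snoc.prems by auto
  then show ?case using h3 by (simp add: filter_eq_rep)
qed

lemma appcomm_sound:
  "s \<in> append_comm (Yset m {r}) W \<Longrightarrow>
   \<exists>f\<in>W. \<exists>y\<in>Yset m {r}. \<forall>a. pj a s = pj a y @ replicate (count_list f a) (U a)"
  unfolding append_comm_def
  using foldl_sound[OF enum_distinct] by (fastforce simp: enum_UNIV)

lemma appcomm_compl:
  "f \<in> W \<Longrightarrow> (\<forall>a. pj a s = pre a @ replicate (count_list f a) (U a)) \<Longrightarrow>
   (\<forall>t0. (\<forall>a. pj a t0 = pre a) \<longrightarrow> t0 \<in> Yset m {r}) \<Longrightarrow> s \<in> append_comm (Yset m {r}) W"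
  unfolding append_comm_def
  using foldl_compl[OF enum_distinct, of s pre f "Yset m {r}"] by (auto simp: enum_UNIV)

definition Inv :: "('a \<Rightarrow> nat) \<Rightarrow> ('a \<Rightarrow> nat) set \<Rightarrow> nat \<Rightarrow> 'a tl list \<Rightarrow> bool" where
 "Inv c P m z \<longleftrightarrow>
  (z \<noteq> [] \<and> (\<exists>b. last z = Dt b) \<and> (\<exists>n. \<forall>a. count_list z (U a) = (\<Sum>p\<in>P. n p * p a)))
  \<or> ((\<forall>a. length (pj a z) > 0 \<longrightarrow> pj a z ! min (m-1) (length (pj a z) - 1) = U a) \<and>
     (\<exists>k h n. (\<forall>p\<in>P. 2*h p < m) \<and>
        (\<forall>a. count_list z (U a) = (m-2)*k a + c a + (\<Sum>p\<in>P. h p*p a) + (\<Sum>p\<in>P. n p*p a)) \<and>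
        (\<forall>a. length (pj a z) = m*k a + c a + (\<Sum>p\<in>P. h p*p a))))"

lemma count_pj: "count_list (pj a z) (U a) = count_list z (U a)"
  by (induct z) auto

lemma count_undotted: "count_list (proj_undotted x) a = count_list x (U a)"
  by (induct x) (auto simp: proj_undotted_def split: tl.splits)

lemma last_filter: "s \<noteq> [] \<Longrightarrow> Q (last s) \<Longrightarrow> last (filter Q s) = last s"
  by (metis append_butlast_last_id filter.simps filter_append last_snoc self_append_conv2)

lemma last_concat_prop:
  "concat ws \<noteq> [] \<Longrightarrow> (\<forall>v\<in>set ws. v \<noteq> [] \<longrightarrow> Q (last v)) \<Longrightarrow> Q (last (concat ws))"
  by (induct ws) (auto simp: last_append)

lemma len_pj_map: "map base z = map base x \<Longrightarrow> length (pj a z) = length (pj a x)"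
proof -
  assume h: "map base z = map base x"
  have "\<And>z. length (pj a z) = length (filter (\<lambda>b. b = a) (map base z))"
    by (simp add: filter_map o_def)
  then show ?thesis using h by metis
qed

lemma last_blk2: "1 \<le> r \<Longrightarrow> r + 1 < m \<Longrightarrow> last (blk m r a) = U a"
  by (simp add: blk_def last_append)

lemma sum_delta_p: "finite P \<Longrightarrow> p \<in> P \<Longrightarrow> (\<Sum>q\<in>P. (if q = p then 1 else 0) * q a) = (p a::nat)"
  by (simp add: if_distrib[where f="\<lambda>x. x * _"] sum.delta' cong: if_cong)

lemma Inv_X:
  assumes r: "1 \<le> r" "r + 1 < m" and P: "finite P"
    and x: "x \<in> Xset c P m {r}"
  shows "Inv c P m x"
proof -
  from x obtain p where p: "p \<in> P" and xf: "x \<in> fl m {r}" and xp: "parikh (proj_undotted x) = p"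
    by (auto simp: Xset_def)
  from xf obtain s where s: "s \<in> sc m {r}" and xs: "x = map switch1 s" and xn: "x \<notin> lists (range Dt)"
    by (auto simp: fl_def switch_def)
  have "x \<noteq> []" using xn by auto
  then have sne: "s \<noteq> []" using xs by simp
  let ?b = "base (last s)"
  have "pj ?b s \<in> kstar (Rm m {r} ?b \<union> {[U ?b]})" using s by (simp add: sc_def proj_tilde_def)
  then obtain ws where ws: "pj ?b s = concat ws" "set ws \<subseteq> Rm m {r} ?b \<union> {[U ?b]}"
    by (auto simp: kstar_def)
  have ls: "last (pj ?b s) = last s" using sne by (rule last_filter) simp
  have ne: "concat ws \<noteq> []" 
  proof -
    have "last s \<in> set (pj ?b s)" using last_in_set[OF sne] by simp
    then show ?thesis using ws(1) by (metis empty_iff list.set(1))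
  qed
  have "(\<lambda>t. t = U ?b) (last (concat ws))"
  proof (rule last_concat_prop[OF ne], intro ballI impI)
    fix v assume "v \<in> set ws" "v \<noteq> []"
    then have "v = blk m r ?b \<or> v = [U ?b]" using ws(2) by (auto simp: Rm_single)
    then show "last v = U ?b"
      using last_blk2[OF r, of ?b] by auto
  qed
  then have "last s = U ?b" using ls ws(1) by simp
  then have "last x = Dt ?b" using xs sne by (metis last_map switch1.simps(1))
  moreover have "\<forall>a. count_list x (U a) = (\<Sum>q\<in>P. (if q = p then 1 else 0) * q a)"
    using xp sum_delta_p[OF P p] by (auto simp: parikh_def count_undotted[symmetric])
  ultimately have "x \<noteq> [] \<and> (\<exists>b. last x = Dt b) \<and> (\<exists>n. \<forall>a. count_list x (U a) = (\<Sum>p\<in>P. n p * p a))"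
    using \<open>x \<noteq> []\<close> by (intro conjI exI) 
  then show ?thesis unfolding Inv_def by (rule disjI1)
qed

lemma Inv_Y:
  assumes r: "1 \<le> r" "r + 1 < m"
    and s: "s \<in> append_comm (Yset m {r}) (Wlang c P m)"
  shows "Inv c P m s"
proof -
  from appcomm_sound[OF s] obtain f y where f: "f \<in> Wlang c P m" and y: "y \<in> Yset m {r}"
    and sy: "\<forall>a. pj a s = pj a y @ replicate (count_list f a) (U a)" by blast
  have "\<forall>a. \<exists>k. pj a y = concat (replicate k (blk m r a))"
    using Yset_sound[OF y] by (simp add: kstarRm)
  then obtain K where K: "\<forall>a. pj a y = concat (replicate (K a) (blk m r a))" by metis
  from f obtain h where h: "\<forall>p\<in>P. 2 * h p < m" and pf: "parikh f = (\<lambda>a. c a + (\<Sum>p\<in>P. h p * p a))"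
    by (auto simp: Wlang_def)
  have cf: "\<And>a. count_list f a = c a + (\<Sum>p\<in>P. h p * p a)"
    using pf by (metis parikh_def)
  have ps: "\<And>a. pj a s = concat (replicate (K a) (blk m r a)) @ replicate (count_list f a) (U a)"
    using sy K by simp
  have len: "\<And>a. length (pj a s) = m * K a + (c a + (\<Sum>p\<in>P. h p * p a))"
    using ps cf by (simp add: length_concat_rep length_blk[OF r])
  have cnt: "\<And>a. count_list s (U a) = (m-2) * K a + c a + (\<Sum>p\<in>P. h p * p a) + (\<Sum>p\<in>P. 0 * p a)"
  proof -
    fix a
    have "count_list s (U a) = count_list (pj a s) (U a)" by (simp add: count_pj)
    also have "\<dots> = K a * (m-2) + count_list f a"
      using ps by (simp add: count_concat_rep count_replicate_gen count_blk[OF r])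
    finally show "?thesis a" using cf by simp
  qed
  have Q: "\<forall>a. length (pj a s) > 0 \<longrightarrow> pj a s ! min (m-1) (length (pj a s) - 1) = U a"
  proof (intro allI impI)
    fix a assume "length (pj a s) > 0"
    show "pj a s ! min (m-1) (length (pj a s) - 1) = U a"
    proof (cases "K a")
      case 0
      then show ?thesis using ps \<open>length (pj a s) > 0\<close> by simp
    next
      case (Suc k)
      then have e: "pj a s = blk m r a @ (concat (replicate k (blk m r a)) @ replicate (count_list f a) (U a))"
        using ps by simp
      have "length (pj a s) \<ge> m" using e by (simp add: length_blk[OF r])
      then have "min (m-1) (length (pj a s) - 1) = m - 1" by simp
      moreover have "m - 1 < length (blk m r a)" using r by (simp add: length_blk[OF r])
      moreover have "pj a s ! (m-1) = U a" using e calculation(2) last_blk[OF r, of a] by (metis nth_append)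
      ultimately show ?thesis by simp
    qed
  qed
  show ?thesis unfolding Inv_def
    apply (rule disjI2)
    apply (rule conjI[OF Q])
    apply (rule exI[of _ K], rule exI[of _ h], rule exI[of _ "\<lambda>_. 0"])
    using h cnt len by simp
qed

definition InvA :: "('a \<Rightarrow> nat) set \<Rightarrow> 'a tl list \<Rightarrow> bool" where
 "InvA P z \<longleftrightarrow> (z \<noteq> [] \<and> (\<exists>b. last z = Dt b) \<and> (\<exists>n. \<forall>a. count_list z (U a) = (\<Sum>p\<in>P. n p * p a)))"

definition InvB :: "('a \<Rightarrow> nat) \<Rightarrow> ('a \<Rightarrow> nat) set \<Rightarrow> nat \<Rightarrow> 'a tl list \<Rightarrow> bool" where
 "InvB c P m z \<longleftrightarrow> ((\<forall>a. length (pj a z) > 0 \<longrightarrow> pj a z ! min (m-1) (length (pj a z) - 1) = U a) \<and>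
     (\<exists>k h n. (\<forall>p\<in>P. 2*h p < m) \<and>
        (\<forall>a. count_list z (U a) = (m-2)*k a + c a + (\<Sum>p\<in>P. h p*p a) + (\<Sum>p\<in>P. n p*p a)) \<and>
        (\<forall>a. length (pj a z) = m*k a + c a + (\<Sum>p\<in>P. h p*p a))))"

lemma Inv_iff: "Inv c P m z \<longleftrightarrow> InvA P z \<or> InvB c P m z"
  unfolding Inv_def InvA_def InvB_def by (rule refl)

lemma Inv_match:
  assumes "Inv c P m x" "Inv c P m y" "wmatch x y = Some z"
  shows "Inv c P m z"
proof -
  note wp = wmatch_props[OF assms(3)]
  note wn = wmatch_nth[OF assms(3)]
  have mb: "map base z = map base x" "map base y = map base x" using wp by auto
  have lenz: "\<And>a. length (pj a z) = length (pj a x)" by (rule len_pj_map[OF mb(1)])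
  have leny: "\<And>a. length (pj a y) = length (pj a x)" by (rule len_pj_map[OF mb(2)])
  have cz: "\<And>a. count_list z (U a) = count_list x (U a) + count_list y (U a)" using wp by auto
  have pjn: "\<And>a j. j < length (pj a x) \<Longrightarrow> lmatch (pj a x ! j) (pj a y ! j) = Some (pj a z ! j)"
    using wmatch_nth[OF conjunct2[OF conjunct2[OF conjunct2[OF wp]]]] by blast
  have Qx: "\<And>a j. j < length (pj a x) \<Longrightarrow> pj a x ! j = U a \<Longrightarrow> pj a z ! j = U a"
  proof -
    fix a j assume "j < length (pj a x)" "pj a x ! j = U a"
    with pjn[of j a] show "pj a z ! j = U a" by (cases "pj a y ! j") (auto split: if_splits)
  qed
  have Qy: "\<And>a j. j < length (pj a x) \<Longrightarrow> pj a y ! j = U a \<Longrightarrow> pj a z ! j = U a"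
  proof -
    fix a j assume "j < length (pj a x)" "pj a y ! j = U a"
    with pjn[of j a] show "pj a z ! j = U a" by (cases "pj a x ! j") (auto split: if_splits)
  qed
  have lastz: "x \<noteq> [] \<Longrightarrow> lmatch (last x) (last y) = Some (last z)"
    using wn by (metis diff_less last_conv_nth length_0_conv length_greater_0_conv zero_less_one)
  have ix: "InvA P x \<or> InvB c P m x" and iy: "InvA P y \<or> InvB c P m y"
    using assms(1,2) by (simp_all add: Inv_iff)
  consider (AA) "InvA P x" "InvA P y" | (AB) "InvA P x" "InvB c P m y" | (BA) "InvA P y" "InvB c P m x"
    | (BB) "InvB c P m x" "InvB c P m y"
    using ix iy by blast
  then show ?thesis
  proof cases
    case AA
    note AA = AA[unfolded InvA_def InvB_def]
    then obtain b b' n n' where xb: "last x = Dt b" and yb: "last y = Dt b'" and xne: "x \<noteq> []"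
      and nx: "\<forall>a. count_list x (U a) = (\<Sum>p\<in>P. n p * p a)"
      and ny: "\<forall>a. count_list y (U a) = (\<Sum>p\<in>P. n' p * p a)" by blast
    have "z \<noteq> []" using xne wn by auto
    moreover have "\<exists>b. last z = Dt b" using lastz[OF xne] xb yb by (auto split: if_splits) (metis)
    moreover have "\<forall>a. count_list z (U a) = (\<Sum>p\<in>P. (n p + n' p) * p a)"
      using cz nx ny by (simp add: algebra_simps sum.distrib)
    ultimately have "z \<noteq> [] \<and> (\<exists>b. last z = Dt b) \<and> (\<exists>n. \<forall>a. count_list z (U a) = (\<Sum>p\<in>P. n p * p a))"
      by (intro conjI exI[of _ "\<lambda>p. n p + n' p"]) auto
    then show ?thesis unfolding Inv_def by (rule disjI1)
  next
    case AB
    note AB = AB[unfolded InvA_def InvB_def]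
    then obtain n where nx: "\<forall>a. count_list x (U a) = (\<Sum>p\<in>P. n p * p a)" by blast
    from AB(2) obtain k h n' where h: "\<forall>p\<in>P. 2*h p < m"
      and cy: "\<forall>a. count_list y (U a) = (m-2)*k a + c a + (\<Sum>p\<in>P. h p*p a) + (\<Sum>p\<in>P. n' p*p a)"
      and ly: "\<forall>a. length (pj a y) = m*k a + c a + (\<Sum>p\<in>P. h p*p a)" by blast
    have Q: "\<forall>a. length (pj a z) > 0 \<longrightarrow> pj a z ! min (m-1) (length (pj a z) - 1) = U a"
    proof (intro allI impI)
      fix a assume "length (pj a z) > 0"
      then have a: "length (pj a y) > 0" "length (pj a x) > 0" using lenz leny by auto
      let ?j = "min (m-1) (length (pj a x) - 1)"
      have j: "?j < length (pj a x)" using a by linarith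
      have yy: "pj a y ! min (m-1) (length (pj a y) - 1) = U a" using AB(2) a(1) by blast
      then have "pj a y ! ?j = U a" by (simp only: leny)
      then show "pj a z ! min (m-1) (length (pj a z) - 1) = U a" using Qy[OF j] lenz by simp
    qed
    have "\<forall>a. count_list z (U a) = (m-2)*k a + c a + (\<Sum>p\<in>P. h p*p a) + (\<Sum>p\<in>P. (n p + n' p)*p a)"
      using cz nx cy by (simp add: algebra_simps sum.distrib)
    moreover have "\<forall>a. length (pj a z) = m*k a + c a + (\<Sum>p\<in>P. h p*p a)" using ly lenz leny by simp
    ultimately show ?thesis unfolding Inv_def
      apply (intro disjI2 conjI[OF Q])
      apply (rule exI[of _ k], rule exI[of _ h], rule exI[of _ "\<lambda>p. n p + n' p"])
      using h by simp
  next
    case BA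
    note BA = BA[unfolded InvA_def InvB_def]
    then obtain n where ny: "\<forall>a. count_list y (U a) = (\<Sum>p\<in>P. n p * p a)" by blast
    from BA(2) obtain k h n' where h: "\<forall>p\<in>P. 2*h p < m"
      and cx: "\<forall>a. count_list x (U a) = (m-2)*k a + c a + (\<Sum>p\<in>P. h p*p a) + (\<Sum>p\<in>P. n' p*p a)"
      and lx: "\<forall>a. length (pj a x) = m*k a + c a + (\<Sum>p\<in>P. h p*p a)" by blast
    have Q: "\<forall>a. length (pj a z) > 0 \<longrightarrow> pj a z ! min (m-1) (length (pj a z) - 1) = U a"
    proof (intro allI impI)
      fix a assume "length (pj a z) > 0"
      then have a: "length (pj a x) > 0" using lenz by auto
      let ?j = "min (m-1) (length (pj a x) - 1)"
      have j: "?j < length (pj a x)" using a by linarith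
      have "pj a x ! ?j = U a" using BA(2) a by blast
      then show "pj a z ! min (m-1) (length (pj a z) - 1) = U a" using Qx[OF j] lenz by simp
    qed
    have "\<forall>a. count_list z (U a) = (m-2)*k a + c a + (\<Sum>p\<in>P. h p*p a) + (\<Sum>p\<in>P. (n p + n' p)*p a)"
      using cz ny cx by (simp add: algebra_simps sum.distrib)
    moreover have "\<forall>a. length (pj a z) = m*k a + c a + (\<Sum>p\<in>P. h p*p a)" using lx lenz by simp
    ultimately show ?thesis unfolding Inv_def
      apply (intro disjI2 conjI[OF Q])
      apply (rule exI[of _ k], rule exI[of _ h], rule exI[of _ "\<lambda>p. n p + n' p"])
      using h by simp
  next
    case BB
    note BB = BB[unfolded InvA_def InvB_def]
    show ?thesis
    proof (cases "\<exists>a. length (pj a x) > 0")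
      case True
      then obtain a where a: "length (pj a x) > 0" by blast
      let ?j = "min (m-1) (length (pj a x) - 1)"
      have j: "?j < length (pj a x)" using a by linarith
      have "pj a x ! ?j = U a" using BB(1) a by blast
      moreover have "pj a y ! ?j = U a"
      proof -
        have a': "length (pj a y) > 0" using a leny by simp
        have yy: "pj a y ! min (m-1) (length (pj a y) - 1) = U a" using BB(2) a' by blast
        then show ?thesis by (simp only: leny)
      qed
      ultimately have False using pjn[OF j] by simp
      then show ?thesis ..
    next
      case False
      then have "x = []" using pj_nil_all[of x] by auto
      then have "z = x" using wn by simp
      then show ?thesis using assms(1) by simp
    qed
  qed
qed

lemma closure_Inv:
  assumes r: "1 \<le> r" "r + 1 < m" and P: "finite P"
  shows "z \<in> match_closure (Dset c P m {r}) \<Longrightarrow> Inv c P m z"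
proof (induction rule: match_closure.induct)
  case (mc_base x)
  then show ?case using Inv_X[OF r P] Inv_Y[OF r] by (auto simp: Dset_def)
next
  case (mc_step x y z)
  then show ?case using Inv_match by blast
qed

lemma count_mapU: "count_list (map U w) (U a) = count_list w a"
  by (induct w) auto

lemma len_pj_mapU: "length (pj a (map U w)) = count_list w a"
  by (induct w) auto

lemma Inv_final:
  assumes m: "even m" "m \<ge> 4" and I: "Inv c P m (map U w)"
  shows "parikh w \<in> linset c P"
proof -
  have notA: "\<not> (map U w \<noteq> [] \<and> (\<exists>b. last (map U w) = Dt b))"
    by (auto simp: last_map)
  then obtain k h n where
    cU: "\<forall>a. count_list (map U w) (U a) = (m-2)*k a + c a + (\<Sum>p\<in>P. h p*p a) + (\<Sum>p\<in>P. n p*p a)"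
    and lw: "\<forall>a. length (pj a (map U w)) = m*k a + c a + (\<Sum>p\<in>P. h p*p a)"
    using I unfolding Inv_def by blast
  have "\<forall>a. parikh w a = c a + (\<Sum>p\<in>P. (h p + m div 2 * n p) * p a)"
  proof
    fix a
    have e1: "count_list w a = (m-2)*k a + c a + (\<Sum>p\<in>P. h p*p a) + (\<Sum>p\<in>P. n p*p a)"
      using cU count_mapU by metis
    have e2: "count_list w a = m*k a + c a + (\<Sum>p\<in>P. h p*p a)"
      using lw len_pj_mapU by metis
    have mk: "m * k a = (m-2) * k a + 2 * k a" using m by (simp add: algebra_simps diff_mult_distrib)
    have N: "(\<Sum>p\<in>P. n p*p a) = 2 * k a" using e1 e2 mk by linarith
    have "(\<Sum>p\<in>P. (h p + m div 2 * n p) * p a) = (\<Sum>p\<in>P. h p*p a) + m div 2 * (\<Sum>p\<in>P. n p*p a)"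
      by (simp add: algebra_simps sum.distrib sum_distrib_left)
    also have "\<dots> = (\<Sum>p\<in>P. h p*p a) + m * k a" using N m by simp
    finally show "parikh w a = c a + (\<Sum>p\<in>P. (h p + m div 2 * n p) * p a)"
      using e2 by (simp add: parikh_def)
  qed
  then have "parikh w = (\<lambda>a. c a + (\<Sum>p\<in>P. (h p + m div 2 * n p) * p a))" by auto
  then show ?thesis unfolding linset_def by (intro CollectI exI)
qed

lemma soundness:
  assumes r: "1 \<le> r" "r + 1 < m" and P: "finite P" and m: "even m" "m \<ge> 4"
    and comm: "commutative_lang L" and PL: "parikh ` L = linset c P"
    and w: "w \<in> C (Dset c P m {r})"
  shows "w \<in> L"
proof -
  have "Inv c P m (map U w)" using w closure_Inv[OF r P] by (auto simp: C_def)
  then have "parikh w \<in> parikh ` L" using Inv_final[OF m] PL by simp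
  then obtain u where "u \<in> L" "parikh u = parikh w" by auto
  then show ?thesis using comm unfolding commutative_lang_def by blast
qed

fun mk :: "('a \<Rightarrow> bool list) \<Rightarrow> 'a list \<Rightarrow> 'a tl list" where
  "mk ls [] = []"
| "mk ls (x#xs) = (if hd (ls x) then Dt x else U x) # mk (ls(x := tl (ls x))) xs"

definition tr :: "'a \<Rightarrow> bool \<Rightarrow> 'a tl" where "tr a b = (if b then Dt a else U a)"

fun andl :: "bool list \<Rightarrow> bool list \<Rightarrow> bool list" where
  "andl (x#xs) (y#ys) = (x \<and> y) # andl xs ys"
| "andl _ _ = []"

lemma tl_andl: "tl (andl xs ys) = andl (tl xs) (tl ys)"
  by (cases xs; cases ys) auto

lemma pj_mk: "(\<forall>a. length (ls a) = count_list w a) \<Longrightarrow> pj a (mk ls w) = map (tr a) (ls a)"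
proof (induction w arbitrary: ls)
  case Nil then show ?case by simp
next
  case (Cons x w)
  obtain b bs where lx: "ls x = b # bs" using Cons.prems by (cases "ls x") (auto dest: spec[of _ x])
  have "\<forall>a. length ((ls(x := tl (ls x))) a) = count_list w a" using Cons.prems lx
    by (auto dest: spec[of _ x])
  note IH = Cons.IH[OF this]
  show ?case using IH lx by (auto simp: tr_def fun_upd_def)
qed

lemma mk_switch: "(\<forall>a. length (ls a) = count_list w a) \<Longrightarrow> map switch1 (mk ls w) = mk (\<lambda>a. map Not (ls a)) w"
proof (induction w arbitrary: ls)
  case Nil then show ?case by simp
next
  case (Cons x w)
  obtain b bs where lx: "ls x = b # bs" using Cons.prems by (cases "ls x") (auto dest: spec[of _ x])
  have "\<forall>a. length ((ls(x := tl (ls x))) a) = count_list w a" using Cons.prems lx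
    by (auto dest: spec[of _ x])
  note IH = Cons.IH[OF this]
  have e: "(\<lambda>a. map Not ((ls(x := tl (ls x))) a)) = (\<lambda>a. map Not (ls a))(x := tl (map Not (ls x)))"
    by (auto simp: map_tl)
  show ?case using IH lx e by (auto simp: fun_upd_def)
qed

lemma mk_false: "(\<forall>a. ls a = replicate (count_list w a) False) \<Longrightarrow> mk ls w = map U w"
proof (induction w arbitrary: ls)
  case Nil then show ?case by simp
next
  case (Cons x w)
  have "\<forall>a. (ls(x := tl (ls x))) a = replicate (count_list w a) False" using Cons.prems
    by auto
  note IH = Cons.IH[OF this]
  have hx: "hd (ls x) = False" using Cons.prems by (auto dest: spec[of _ x])
  show ?case using IH hx by (simp add: fun_upd_def)
qed

lemma mk_match:
  "(\<forall>a. list_all2 (\<lambda>p q. p \<or> q) (ls1 a) (ls2 a) \<and> length (ls1 a) = count_list w a) \<Longrightarrow>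
   wmatch (mk ls1 w) (mk ls2 w) = Some (mk (\<lambda>a. andl (ls1 a) (ls2 a)) w)"
proof (induction w arbitrary: ls1 ls2)
  case Nil then show ?case by simp
next
  case (Cons x w)
  obtain b bs where l1: "ls1 x = b # bs" using Cons.prems by (cases "ls1 x") (auto dest: spec[of _ x])
  obtain b' bs' where l2: "ls2 x = b' # bs'" using Cons.prems l1 by (cases "ls2 x") (auto dest: spec[of _ x])
  have bb: "b \<or> b'" and rest: "list_all2 (\<lambda>p q. p \<or> q) bs bs'" using Cons.prems l1 l2 by (auto dest: spec[of _ x])
  have "\<forall>a. list_all2 (\<lambda>p q. p \<or> q) ((ls1(x := tl (ls1 x))) a) ((ls2(x := tl (ls2 x))) a) \<and>
            length ((ls1(x := tl (ls1 x))) a) = count_list w a"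
    using Cons.prems l1 l2 rest by (auto dest: spec[of _ x])
  note IH = Cons.IH[OF this]
  have e: "(\<lambda>a. andl ((ls1(x := tl (ls1 x))) a) ((ls2(x := tl (ls2 x))) a)) =
       (\<lambda>a. andl (ls1 a) (ls2 a))(x := tl (andl (ls1 x) (ls2 x)))"
    by (auto simp: tl_andl)
  show ?case using IH l1 l2 bb e by (auto simp: fun_upd_def)
qed

definition bb :: "nat \<Rightarrow> nat \<Rightarrow> bool list" where
  "bb m r = [True] @ replicate (r - 1) False @ [True] @ replicate (m - r - 1) False"

definition hs :: "('a \<Rightarrow> nat) list \<Rightarrow> 'a \<Rightarrow> nat" where
  "hs ps a = sum_list (map (\<lambda>q. q a div 2) ps)"

lemma map_tr_bb: "map (tr a) (bb m r) = blk m r a"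
  by (simp add: bb_def blk_def tr_def)

lemma length_bb: "1 \<le> r \<Longrightarrow> r + 1 < m \<Longrightarrow> length (bb m r) = m"
  by (simp add: bb_def)

lemma count_bb: "count_list (bb m r) True = 2"
  by (simp add: bb_def count_replicate_gen)

lemma andl_append: "length xs = length ys \<Longrightarrow> andl (xs @ xs') (ys @ ys') = andl xs ys @ andl xs' ys'"
proof (induct xs arbitrary: ys)
  case Nil then show ?case by simp
next
  case (Cons x xs) then show ?case by (cases ys) auto
qed

lemma andl_True: "andl xs (replicate (length xs) True) = xs"
  by (induct xs) auto

lemma andl_False: "length ys = n \<Longrightarrow> andl (replicate n False) ys = replicate n False"
  by (induct n arbitrary: ys) (auto simp: length_Suc_conv)

lemma andl_Not: "andl xs (map Not xs) = replicate (length xs) False"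
  by (induct xs) auto

lemma ok_True: "list_all2 (\<lambda>p q. p \<or> q) xs (replicate (length xs) True)"
  by (induct xs) auto

lemma ok_False: "list_all2 (\<lambda>p q. p \<or> q) (replicate n False) (replicate n True)"
  by (induct n) auto

lemma ok_Not: "list_all2 (\<lambda>p q. p \<or> q) xs (map Not xs)"
  by (induct xs) auto

lemma concat_rep_single: "concat (replicate n [x]) = replicate n x"
  by (induct n) auto

lemma count_tr: "count_list (map (tr a) xs) (U a) = count_list xs False"
  by (induct xs) (auto simp: tr_def)

lemma count_Not: "count_list (map Not xs) False = count_list xs True"
  by (induct xs) auto

lemma length_concat_bb: "1 \<le> r \<Longrightarrow> r + 1 < m \<Longrightarrow> length (concat (replicate k (bb m r))) = m * k"
  by (simp add: length_concat_rep length_bb)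

lemma fill_in_X:
  assumes r: "1 \<le> r" "r + 1 < m" and p: "p \<in> P" and ev: "\<forall>a. even (p a)" and nz: "\<exists>a. p a \<noteq> 0"
    and len: "\<forall>a. length (G a) = count_list w a"
    and G: "\<forall>a. G a = replicate (m * off a) False @ concat (replicate (p a div 2) (bb m r)) @ replicate (t a) False"
  shows "mk (\<lambda>a. map Not (G a)) w \<in> Xset c P m {r}"
proof -
  let ?F = "mk (\<lambda>a. map Not (G a)) w"
  have lenN: "\<forall>a. length (map Not (G a)) = count_list w a" using len by simp
  have F: "?F = map switch1 (mk G w)" using mk_switch[OF len] by simp
  have pjG: "\<And>a. pj a (mk G w) = map (tr a) (G a)" using pj_mk[OF len] by blast
  have "mk G w \<in> sc m {r}"
    unfolding sc_def proj_tilde_def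
  proof (intro CollectI allI)
    fix a
    let ?ws = "replicate (m * off a) [U a] @ replicate (p a div 2) (blk m r a) @ replicate (t a) [U a]"
    have "pj a (mk G w) = concat ?ws"
      using pjG[of a] G by (simp add: map_concat map_tr_bb concat_rep_single tr_def)
    moreover have "set ?ws \<subseteq> Rm m {r} a \<union> {[U a]}" by (auto simp: Rm_single)
    ultimately show "pj a (mk G w) \<in> kstar (Rm m {r} a \<union> {[U a]})"
      unfolding kstar_def by blast
  qed
  then have Fs: "?F \<in> switch (sc m {r})" unfolding switch_def using F by blast
  from nz obtain a where a: "p a \<noteq> 0" by blast
  have "p a div 2 > 0" using a ev by (metis dvd_div_eq_0_iff gr0I)
  then have "True \<in> set (concat (replicate (p a div 2) (bb m r)))" by (auto simp: bb_def)
  then have "True \<in> set (G a)" using G by simp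
  then have "U a \<in> set (map (tr a) (map Not (G a)))" by (force simp: tr_def)
  then have "U a \<in> set (pj a ?F)" using pj_mk[OF lenN] by simp
  then have "U a \<in> set ?F" by simp
  then have "?F \<notin> lists (range Dt)" by auto
  then have Ffl: "?F \<in> fl m {r}" using Fs by (simp add: fl_def)
  have "parikh (proj_undotted ?F) = p"
  proof
    fix b
    have "parikh (proj_undotted ?F) b = count_list (pj b ?F) (U b)"
      by (simp add: parikh_def count_undotted count_pj)
    also have "\<dots> = count_list (G b) True"
      using pj_mk[OF lenN, of b] count_tr[of b "map Not (G b)"] count_Not[of "G b"] by (simp del: map_map)
    also have "\<dots> = p b div 2 * 2"
      using G by (simp add: count_list_append count_replicate_gen count_concat_rep count_bb)
    also have "\<dots> = p b" using ev by simp
    finally show "parikh (proj_undotted ?F) b = p b" .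
  qed
  then show ?thesis using Ffl p unfolding Xset_def by blast
qed

lemma ok_True': "length xs = n \<Longrightarrow> list_all2 (\<lambda>p q. p \<or> q) xs (replicate n True)"
  using ok_True by blast

lemma fills:
  assumes r: "1 \<le> r" "r + 1 < m" and ev: "\<forall>p\<in>P. \<forall>a. even (p a)"
  shows "set ps \<subseteq> P \<Longrightarrow> (\<forall>a. m * off a + m * hs ps a + ee a = count_list w a) \<Longrightarrow>
    mk (\<lambda>a. replicate (m * off a) False @ concat (replicate (hs ps a) (bb m r)) @ replicate (ee a) False) w
      \<in> match_closure (Dset c P m {r}) \<Longrightarrow> map U w \<in> match_closure (Dset c P m {r})"
proof (induction ps arbitrary: off)
  case Nil
  have "mk (\<lambda>a. replicate (m * off a) False @ concat (replicate (hs [] a) (bb m r)) @ replicate (ee a) False) w = map U w"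
    by (rule mk_false) (use Nil.prems(2) in \<open>simp add: hs_def replicate_add[symmetric]\<close>)
  then show ?case using Nil.prems(3) by simp
next
  case (Cons p ps)
  have pP: "p \<in> P" and psP: "set ps \<subseteq> P" using Cons.prems(1) by auto
  have hsc: "\<And>a. hs (p # ps) a = p a div 2 + hs ps a" by (simp add: hs_def)
  show ?case
  proof (cases "\<exists>a. p a \<noteq> 0")
    case False
    then have "\<And>a. hs (p # ps) a = hs ps a" using hsc by simp
    then show ?thesis using Cons.IH[OF psP] Cons.prems(2,3) by simp
  next
    case True
    let ?d = "\<lambda>a. p a div 2"
    let ?G = "\<lambda>a. replicate (m * off a) False @ concat (replicate (?d a) (bb m r)) @ replicate (m * hs ps a + ee a) False"
    let ?cur = "\<lambda>a. replicate (m * off a) False @ concat (replicate (hs (p # ps) a) (bb m r)) @ replicate (ee a) False"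
    let ?new = "\<lambda>a. replicate (m * (off a + ?d a)) False @ concat (replicate (hs ps a) (bb m r)) @ replicate (ee a) False"
    have cnt: "\<And>a. m * off a + m * (p a div 2 + hs ps a) + ee a = count_list w a"
      using Cons.prems(2) hsc by metis
    have lenG: "\<forall>a. length (?G a) = count_list w a"
      using cnt by (simp add: length_concat_bb[OF r] algebra_simps)
    have Fx: "mk (\<lambda>a. map Not (?G a)) w \<in> Xset c P m {r}"
      by (rule fill_in_X[OF r pP _ True lenG]) (use ev pP in auto)
    then have Fc: "mk (\<lambda>a. map Not (?G a)) w \<in> match_closure (Dset c P m {r})"
      by (auto simp: Dset_def intro: mc_base)
    have cur_split: "\<And>a. ?cur a = replicate (m * off a) False @ concat (replicate (?d a) (bb m r)) @
                     (concat (replicate (hs ps a) (bb m r)) @ replicate (ee a) False)"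
      by (simp add: hsc replicate_add)
    have notG: "\<And>a. map Not (?G a) = replicate (m * off a) True @ map Not (concat (replicate (?d a) (bb m r))) @
                     replicate (length (concat (replicate (hs ps a) (bb m r)) @ replicate (ee a) False)) True"
      by (simp add: length_concat_bb[OF r])
    have ok: "\<forall>a. list_all2 (\<lambda>p q. p \<or> q) (?cur a) (map Not (?G a)) \<and> length (?cur a) = count_list w a"
    proof
      fix a
      show "list_all2 (\<lambda>p q. p \<or> q) (?cur a) (map Not (?G a)) \<and> length (?cur a) = count_list w a"
        unfolding cur_split notG
        using cnt[of a]
        by (auto intro!: list_all2_appendI ok_False ok_Not ok_True' simp: length_concat_bb[OF r] algebra_simps)
    qed
    have andl_eq: "\<And>a. andl (?cur a) (map Not (?G a)) = ?new a"
    proof -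
      fix a
      have "andl (?cur a) (map Not (?G a)) =
          andl (replicate (m * off a) False) (replicate (m * off a) True) @
          andl (concat (replicate (?d a) (bb m r))) (map Not (concat (replicate (?d a) (bb m r)))) @
          andl (concat (replicate (hs ps a) (bb m r)) @ replicate (ee a) False)
               (replicate (length (concat (replicate (hs ps a) (bb m r)) @ replicate (ee a) False)) True)"
        unfolding cur_split notG by (simp add: andl_append)
      also have "\<dots> = ?new a"
        by (simp only: andl_True andl_Not andl_False length_replicate length_concat_bb[OF r])
           (simp add: replicate_add[symmetric] algebra_simps)
      finally show "andl (?cur a) (map Not (?G a)) = ?new a" .
    qed
    have "wmatch (mk ?cur w) (mk (\<lambda>a. map Not (?G a)) w) = Some (mk ?new w)"
      using mk_match[OF ok] andl_eq by simp
    then have "mk ?new w \<in> match_closure (Dset c P m {r})"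
      using Cons.prems(3) Fc by (rule_tac mc_step) auto
    moreover have "\<forall>a. m * (off a + ?d a) + m * hs ps a + ee a = count_list w a"
      using cnt by (simp add: algebra_simps)
    ultimately show ?thesis using Cons.IH[OF psP, of "\<lambda>a. off a + ?d a"] by simp
  qed
qed

lemma count_concat_enum:
  "distinct as \<Longrightarrow> count_list (concat (map (\<lambda>b. replicate (ee b) b) as)) a = (if a \<in> set as then ee a else 0)"
  by (induct as) (auto simp: count_list_append count_replicate_gen)

lemma sum_list_ps:
  "sum_list (map f (concat (map (\<lambda>p. replicate (g p) p) xs))) = sum_list (map (\<lambda>p. g p * f p) xs)"
  by (induct xs) (auto simp: map_concat sum_list_append sum_list_replicate)

lemma completeness:
  assumes r: "1 \<le> r" "r + 1 < m" and m: "even m" "m \<ge> 4" and P: "finite P"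
    and ev: "\<forall>p\<in>P. \<forall>a. even (p a)"
    and PL: "parikh ` L = linset c P" and w: "w \<in> L"
  shows "w \<in> C (Dset c P m {r})"
proof -
  have "parikh w \<in> linset c P" using PL w by blast
  then obtain n where pw: "parikh w = (\<lambda>a. c a + (\<Sum>p\<in>P. n p * p a))" by (auto simp: linset_def)
  define d where "d = m div 2"
  have d0: "d > 0" and md: "m = 2 * d" using m by (auto simp: d_def)
  define h where "h p = n p mod d" for p
  define g where "g p = n p div d" for p
  have nhg: "\<And>p. n p = h p + d * g p" by (simp add: h_def g_def)
  have h2: "\<forall>p\<in>P. 2 * h p < m" using d0 md by (simp add: h_def)
  obtain xs where xs: "set xs = P" "distinct xs" using finite_distinct_list[OF P] by blast
  define ps where "ps = concat (map (\<lambda>p. replicate (g p) p) xs)"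
  have psP: "set ps \<subseteq> P" using xs by (auto simp: ps_def)
  have hsps: "\<And>a. hs ps a = (\<Sum>p\<in>P. g p * (p a div 2))"
    unfolding hs_def ps_def sum_list_ps using xs by (simp add: sum_list_distinct_conv_sum_set)
  define ee where "ee a = c a + (\<Sum>p\<in>P. h p * p a)" for a
  have cnt: "\<forall>a. m * (0::nat) + m * hs ps a + ee a = count_list w a"
  proof
    fix a
    have "m * hs ps a = (\<Sum>p\<in>P. g p * (m * (p a div 2)))"
      by (simp add: hsps sum_distrib_left algebra_simps)
    also have "\<dots> = (\<Sum>p\<in>P. d * g p * p a)"
    proof (rule sum.cong[OF refl])
      fix p assume "p \<in> P"
      then have "even (p a)" using ev by blast
      then show "g p * (m * (p a div 2)) = d * g p * p a" using md by (auto elim!: evenE)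
    qed
    finally have e1: "m * hs ps a = (\<Sum>p\<in>P. d * g p * p a)" .
    have "count_list w a = c a + (\<Sum>p\<in>P. n p * p a)" using pw by (metis parikh_def)
    also have "\<dots> = c a + (\<Sum>p\<in>P. h p * p a) + (\<Sum>p\<in>P. d * g p * p a)"
      by (simp add: nhg algebra_simps sum.distrib)
    finally show "m * (0::nat) + m * hs ps a + ee a = count_list w a" using e1 by (simp add: ee_def)
  qed
  let ?sc = "\<lambda>a. replicate (m * 0) False @ concat (replicate (hs ps a) (bb m r)) @ replicate (ee a) False"
  have lensc: "\<forall>a. length (?sc a) = count_list w a" using cnt by (simp add: length_concat_bb[OF r])
  define fw where "fw = concat (map (\<lambda>b. replicate (ee b) b) Enum.enum)"
  have cfw: "\<And>a. count_list fw a = ee a"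
    unfolding fw_def by (simp add: count_concat_enum enum_distinct enum_UNIV)
  have fwW: "fw \<in> Wlang c P m"
    unfolding Wlang_def parikh_def using h2 by (intro CollectI exI[of _ h]) (auto simp: cfw ee_def)
  have "mk ?sc w \<in> append_comm (Yset m {r}) (Wlang c P m)"
  proof (rule appcomm_compl[OF fwW])
    show "\<forall>a. pj a (mk ?sc w) = concat (replicate (hs ps a) (blk m r a)) @ replicate (count_list fw a) (U a)"
      using pj_mk[OF lensc] by (simp add: cfw map_concat map_tr_bb tr_def)
    show "\<forall>t0. (\<forall>a. pj a t0 = concat (replicate (hs ps a) (blk m r a))) \<longrightarrow> t0 \<in> Yset m {r}"
      by (auto intro!: Yset_compl simp: kstarRm)
  qed
  then have "mk ?sc w \<in> match_closure (Dset c P m {r})"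
    by (auto simp: Dset_def intro: mc_base)
  then have "map U w \<in> match_closure (Dset c P m {r})"
    using fills[OF r ev psP, of "\<lambda>_. 0" ee w c] cnt by simp
  then show ?thesis by (simp add: C_def)
qed

theorem theorem5:
  fixes L :: "('a::enum) list set" and c :: "'a \<Rightarrow> nat" and P :: "('a \<Rightarrow> nat) set"
    and m r :: nat
  assumes "commutative_lang L"
    and "parikh ` L = linset c P"
    and "finite P" and "P \<noteq> {}"
    and "\<forall>p\<in>P. \<forall>a. even (p a)"
    and "even m" and "m \<ge> 4"
    and "1 \<le> r" and "r \<le> m div 2 - 1"
  shows "L = C (Dset c P m {r})"
proof -
  have r2: "r + 1 < m" using assms(7,9) by linarith
  show ?thesis
  proof
    show "L \<subseteq> C (Dset c P m {r})"
      using completeness[OF assms(8) r2 assms(6,7,3,5,2)] by blast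
    show "C (Dset c P m {r}) \<subseteq> L"
      using soundness[OF assms(8) r2 assms(3,6,7,1,2)] by blast
  qed
qed

end
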